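(* Let $\mathcal{T}$ be the set of infinite sequences $\mathbf{k}=(k_1,k_2,\ldots)$ of positive integers with $k_1\geq 2$, $k_i\geq 1$ for $i\geq 2$, and such that if $k_1=2$ then $k_s\geq 2$ for some $s\geq 2$. (i) For every $\mathbf{k}\in\mathcal{T}$ the limit $\lim_{r\to\infty}\zeta^{\star}(k_1,\ldots,k_r)$ exists and is $>1$. (ii) The map $\eta:\mathcal{T}\to(1,+\infty)$, $\eta(\mathbf{k})=\lim_{r\to\infty}\zeta^{\star}(k_1,\ldots,k_r)$, is bijective. Moreover, defining $\mathbf{k}\succ\mathbf{m}$ for $\mathbf{k},\mathbf{m}\in\mathcal{T}$ to mean that there is $j\geq 0$ with $k_i=m_i$ for $1\leq i\leq j$ and $k_{j+1}<m_{j+1}$, we have $\mathbf{k}\succ\mathbf{m}$ if and only if $\eta(\mathbf{k})>\eta(\mathbf{m})$. (iii) Let $\mathcal{Z}^{\star}$ be the set of all multiple zeta-star values. Then for every $n\geq 1$, the $n$-th derived set of $\mathcal{Z}^{\star}$ equals $[1,+\infty)$.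
   Context: For integers $k_1\geq 2$, $k_2,\ldots,k_r\geq 1$ ($r\geq1$), $\zeta^{\star}(k_1,\ldots,k_r)=\sum_{n_1\geq\cdots\geq n_r\geq 1}\frac{1}{n_1^{k_1}\cdots n_r^{k_r}}$; $\mathcal{Z}^{\star}$ is the set of all such values. For $\mathcal{C}\subseteq\mathbb{R}$, $\mathcal{C}'$ is its set of accumulation points, $\mathcal{C}^{(1)}=\mathcal{C}'$ and $\mathcal{C}^{(n+1)}=(\mathcal{C}^{(n)})'$. *)

theory Defs
  imports "HOL-Analysis.Analysis"
begin

definition zs_indices :: "nat list \<Rightarrow> nat list set" where
  "zs_indices ks = {ns. length ns = length ks \<and> sorted_wrt (\<ge>) ns \<and> (\<forall>n\<in>set ns. n \<ge> 1)}"

definition zeta_star :: "nat list \<Rightarrow> real" where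
  "zeta_star ks = (\<Sum>\<^sub>\<infinity>ns\<in>zs_indices ks. \<Prod>i<length ks. 1 / real (ns ! i) ^ (ks ! i))"

definition admissible :: "nat list \<Rightarrow> bool" where
  "admissible ks \<longleftrightarrow> ks \<noteq> [] \<and> hd ks \<ge> 2 \<and> (\<forall>k\<in>set ks. k \<ge> 1)"

definition Zstar :: "real set" where
  "Zstar = {zeta_star ks | ks. admissible ks}"

definition derived_set :: "real set \<Rightarrow> real set" where
  "derived_set S = {x. x islimpt S}"

text \<open>The set T of infinite sequences; index 0 corresponds to k_1.\<close>
definition seqT :: "(nat \<Rightarrow> nat) set" where
  "seqT = {k. k 0 \<ge> 2 \<and> (\<forall>i. k i \<ge> 1) \<and> (k 0 = 2 \<longrightarrow> (\<exists>s\<ge>1. k s \<ge> 2))}"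

definition eta :: "(nat \<Rightarrow> nat) \<Rightarrow> real" where
  "eta k = lim (\<lambda>r. zeta_star (map k [0..<r]))"

definition succT :: "(nat \<Rightarrow> nat) \<Rightarrow> (nat \<Rightarrow> nat) \<Rightarrow> bool" where
  "succT k m \<longleftrightarrow> (\<exists>j. (\<forall>i<j. k i = m i) \<and> k j < m j)"

end

theory Submission imports Defs begin

primrec SW :: "(nat \<Rightarrow> real) \<Rightarrow> nat list \<Rightarrow> nat \<Rightarrow> real" where
  "SW w [] n = w n"
| "SW w (a#ks) n = (\<Sum>m=1..n. SW w ks m / real m ^ a)"

lemma SW_app: "SW w (xs @ ys) n = SW (SW w ys) xs n"
  by (induction xs arbitrary: n) auto

lemma SW_cong: "(\<And>m. m \<ge> 1 \<Longrightarrow> w m = w' m) \<Longrightarrow> n \<ge> 1 \<Longrightarrow> SW w ks n = SW w' ks n"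
  by (induction ks arbitrary: n) (auto intro!: sum.cong)

lemma SW_nonneg: "(\<And>m. m \<ge> 1 \<Longrightarrow> 0 \<le> w m) \<Longrightarrow> n \<ge> 1 \<Longrightarrow> 0 \<le> SW w ks n"
proof (induction ks arbitrary: n)
  case (Cons a ks) then show ?case by (auto intro!: sum_nonneg divide_nonneg_pos)
qed auto

lemma SW_nonneg': "(\<And>m. m \<ge> 1 \<Longrightarrow> 0 \<le> w m) \<Longrightarrow> ks \<noteq> [] \<Longrightarrow> 0 \<le> SW w ks n"
  by (cases ks) (auto intro!: sum_nonneg divide_nonneg_pos SW_nonneg)

lemma SW_mono_w: "(\<And>m. m \<ge> 1 \<Longrightarrow> w m \<le> w' m) \<Longrightarrow> n \<ge> 1 \<Longrightarrow> SW w ks n \<le> SW w' ks n"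
proof (induction ks arbitrary: n)
  case (Cons a ks) then show ?case by (auto intro!: sum_mono divide_right_mono)
qed auto

lemma SW_scale: "SW (\<lambda>m. c * w m) ks n = c * SW w ks n"
  by (induction ks arbitrary: n) (auto simp: sum_distrib_left)

lemma SW_diff: "SW (\<lambda>m. w m - w' m) ks n = SW w ks n - SW w' ks n"
  by (induction ks arbitrary: n) (auto simp: sum_subtractf diff_divide_distrib)

lemma SW_mono_n:
  assumes "\<And>m. m \<ge> 1 \<Longrightarrow> 0 \<le> w m" "\<And>m m'. 1 \<le> m \<Longrightarrow> m \<le> m' \<Longrightarrow> w m \<le> w m'"
  shows "1 \<le> n \<Longrightarrow> n \<le> n' \<Longrightarrow> SW w ks n \<le> SW w ks n'"
proof (cases ks)
  case Nil then show "1 \<le> n \<Longrightarrow> n \<le> n' \<Longrightarrow> SW w ks n \<le> SW w ks n'" using assms by auto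
next
  case (Cons a ks')
  assume "1 \<le> n" "n \<le> n'"
  have "(\<Sum>m=1..n. SW w ks' m / real m ^ a) \<le> (\<Sum>m=1..n'. SW w ks' m / real m ^ a)"
    using \<open>n \<le> n'\<close> by (intro sum_mono2) (auto intro!: divide_nonneg_pos SW_nonneg assms)
  then show ?thesis using Cons by simp
qed

lemma SW_mono_exp:
  assumes "\<And>m. m \<ge> 1 \<Longrightarrow> 0 \<le> w m"
  shows "list_all2 (\<le>) ks ks' \<Longrightarrow> n \<ge> 1 \<Longrightarrow> SW w ks' n \<le> SW w ks n"
proof (induction ks arbitrary: ks' n)
  case Nil then show ?case by simp
next
  case (Cons a ks)
  then obtain a' ks2 where ks': "ks' = a' # ks2" "a \<le> a'" "list_all2 (\<le>) ks ks2"
    by (cases ks') auto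
  have "SW w ks2 m / real m ^ a' \<le> SW w ks m / real m ^ a" if "m \<in> {1..n}" for m
  proof -
    have m: "m \<ge> 1" using that by auto
    have "SW w ks2 m / real m ^ a' \<le> SW w ks2 m / real m ^ a"
      using m \<open>a \<le> a'\<close> by (intro divide_left_mono SW_nonneg assms) (auto intro: power_increasing)
    also have "\<dots> \<le> SW w ks m / real m ^ a"
      using Cons.IH[OF ks'(3) m] m by (intro divide_right_mono) auto
    finally show ?thesis .
  qed
  then show ?case using ks' by (auto intro!: sum_mono)
qed

lemma SW_pos:
  assumes "\<And>m. m \<ge> 1 \<Longrightarrow> 0 \<le> w m" "w n > 0" "n \<ge> 1"
  shows "SW w ks n > 0"
proof (induction ks)
  case Nil then show ?case using assms by simp
next
  case (Cons a ks)
  have "SW w ks n / real n ^ a \<le> (\<Sum>m=1..n. SW w ks m / real m ^ a)"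
    using assms(3) by (intro member_le_sum) (auto intro!: divide_nonneg_pos SW_nonneg assms(1))
  moreover have "SW w ks n / real n ^ a > 0" using Cons assms(3) by simp
  ultimately show ?case by simp
qed

abbreviation S where "S \<equiv> SW (\<lambda>_. 1)"

lemma SW_id_ones: "SW real (replicate t 1) n = real n"
  by (induction t arbitrary: n) auto

lemma SW_id_single: "b \<ge> 1 \<Longrightarrow> SW real [b] n = S [b - 1] n"
proof -
  assume b: "b \<ge> 1"
  have "real m / real m ^ b = 1 / real m ^ (b - 1)" if "m \<ge> 1" for m
  proof -
    have "real m ^ b = real m * real m ^ (b - 1)" using b by (metis Suc_diff_le diff_Suc_1 power_Suc)
    then show ?thesis using that by simp
  qed
  then show ?thesis by (auto intro!: sum.cong)
qed

lemma SW_id_1: "SW real [1] = real"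
  by (rule ext) simp

lemma SW_id_app1: "SW real (p @ [1]) n = SW real p n"
  by (simp only: SW_app SW_id_1)

definition dd :: "nat \<Rightarrow> nat \<Rightarrow> real" where
  "dd t n = SW (\<lambda>m. real m - 1) (replicate t 1) n"

lemma dd_eq: "dd t n = real n - S (replicate t 1) n"
  unfolding dd_def using SW_diff[of real "\<lambda>_. 1"] SW_id_ones by simp

lemma sum_aux: "n \<ge> 1 \<Longrightarrow> (\<Sum>m=1..n. (c::real) - (if m = 1 then c else 0)) = (real n - 1) * c"
proof -
  assume n: "n \<ge> 1"
  have "(\<Sum>m=1..n. (if m = 1 then c else 0)) = c" using n by (simp add: sum.delta)
  then show ?thesis by (simp add: sum_subtractf algebra_simps)
qed

lemma dd_bound: "n \<ge> 1 \<Longrightarrow> dd t n \<le> (real n - 1) * (1 - 1 / real n) ^ t"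
proof (induction t arbitrary: n)
  case 0 then show ?case by (simp add: dd_def)
next
  case (Suc t)
  have "dd (Suc t) n = (\<Sum>m=1..n. dd t m / real m)" by (simp add: dd_def)
  also have "\<dots> \<le> (\<Sum>m=1..n. (1 - 1 / real n) ^ (Suc t) - (if m = 1 then (1 - 1 / real n) ^ (Suc t) else 0))"
  proof (intro sum_mono)
    fix m assume m: "m \<in> {1..n}"
    have "dd t m / real m \<le> (real m - 1) * (1 - 1 / real m) ^ t / real m"
      using Suc.IH[of m] m by (intro divide_right_mono) auto
    also have "\<dots> = (1 - 1 / real m) ^ Suc t" using m by (simp add: field_simps)
    finally have 1: "dd t m / real m \<le> (1 - 1 / real m) ^ Suc t" .
    show "dd t m / real m \<le> (1 - 1 / real n) ^ (Suc t) - (if m = 1 then (1 - 1 / real n) ^ (Suc t) else 0)"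
    proof (cases "m = 1")
      case True then show ?thesis using 1 by simp
    next
      case False
      have "(1 - 1 / real m) ^ Suc t \<le> (1 - 1 / real n) ^ Suc t"
      proof (rule power_mono)
        have "1 / real n \<le> 1 / real m" using m by (intro divide_left_mono) auto
        then show "1 - 1 / real m \<le> 1 - 1 / real n" by linarith
        show "0 \<le> 1 - 1 / real m" using m by simp
      qed
      then show ?thesis using 1 False by simp
    qed
  qed
  also have "\<dots> = (real n - 1) * (1 - 1 / real n) ^ Suc t"
    using Suc.prems by (rule sum_aux)
  finally show ?case .
qed

lemma dd_nonneg: "n \<ge> 1 \<Longrightarrow> dd t n \<ge> 0"
proof (cases t)
  case (Suc t')
  assume n: "n \<ge> 1"
  have "0 \<le> (\<Sum>m=1..n. SW (\<lambda>m. real m - 1) (replicate t' 1) m / real m)"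
    by (intro sum_nonneg divide_nonneg_nonneg SW_nonneg) auto
  then show ?thesis using Suc by (simp add: dd_def)
qed (simp add: dd_def)

lemma dd_lim: "n \<ge> 1 \<Longrightarrow> (\<lambda>t. dd t n) \<longlonglongrightarrow> 0"
proof -
  assume n: "n \<ge> 1"
  have a: "0 < 1 / real n" "1 / real n \<le> 1" using n by auto
  have b: "\<bar>1 - 1 / real n\<bar> = 1 - 1 / real n" using a by (intro abs_of_nonneg) linarith
  have "norm (1 - 1 / real n) < 1" unfolding real_norm_def b using a by linarith
  then have "(\<lambda>t. (1 - 1 / real n) ^ t) \<longlonglongrightarrow> 0" by (rule LIMSEQ_power_zero)
  then have "(\<lambda>t. (real n - 1) * (1 - 1 / real n) ^ t) \<longlonglongrightarrow> (real n - 1) * 0"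
    by (intro tendsto_mult tendsto_const)
  then have lim: "(\<lambda>t. (real n - 1) * (1 - 1 / real n) ^ t) \<longlonglongrightarrow> 0" by simp
  have e1: "\<forall>\<^sub>F t in sequentially. 0 \<le> dd t n" using dd_nonneg[OF n] by simp
  have e2: "\<forall>\<^sub>F t in sequentially. dd t n \<le> (real n - 1) * (1 - 1 / real n) ^ t"
    using dd_bound[OF n] by simp
  show ?thesis by (rule tendsto_sandwich[OF e1 e2 tendsto_const lim])
qed

lemma S_ones_lim: "n \<ge> 1 \<Longrightarrow> (\<lambda>t. S (replicate t 1) n) \<longlonglongrightarrow> real n"
proof -
  assume n: "n \<ge> 1"
  have "(\<lambda>t. real n - dd t n) \<longlonglongrightarrow> real n - 0" by (intro tendsto_diff tendsto_const dd_lim n)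
  then show ?thesis by (simp add: dd_eq)
qed

lemma S_ones_le: "n \<ge> 1 \<Longrightarrow> S (replicate t 1) n \<le> real n"
  using dd_nonneg[of n t] by (auto simp: dd_eq)


lemma sqrt_sum: "(\<Sum>m=1..n. 1 / sqrt (real m)) \<le> 2 * sqrt (real n)"
proof (induction n)
  case 0 then show ?case by simp
next
  case (Suc n)
  have key: "2 * sqrt (real n) + 1 / sqrt (real (Suc n)) \<le> 2 * sqrt (real (Suc n))"
  proof -
    have p: "sqrt (real (Suc n)) > 0" by simp
    have "sqrt (real n) * sqrt (real (Suc n)) \<le> real n + 1/2"
    proof -
      have "sqrt (real n) * sqrt (real (Suc n)) = sqrt (real n * real (Suc n))" by (simp add: real_sqrt_mult)
      also have "\<dots> \<le> sqrt ((real n + 1/2)^2)" by (intro real_sqrt_le_mono) (simp add: power2_eq_square algebra_simps)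
      also have "\<dots> = real n + 1/2" by simp
      finally show ?thesis .
    qed
    then have "2 * sqrt (real n) * sqrt (real (Suc n)) + 1 \<le> 2 * (sqrt (real (Suc n)))^2" by simp
    then have "(2 * sqrt (real n) + 1 / sqrt (real (Suc n))) * sqrt (real (Suc n)) \<le> (2 * sqrt (real (Suc n))) * sqrt (real (Suc n))"
      using p by (simp add: algebra_simps power2_eq_square)
    then show ?thesis using p by (simp only: mult_le_cancel_right)
  qed
  have "(\<Sum>m=1..Suc n. 1 / sqrt (real m)) = (\<Sum>m=1..n. 1 / sqrt (real m)) + 1 / sqrt (real (Suc n))"
    by simp
  also have "\<dots> \<le> 2 * sqrt (real n) + 1 / sqrt (real (Suc n))" using Suc.IH by simp
  finally show ?case using key by linarith
qed

lemma S_sqrt: "(\<forall>k\<in>set ks. k \<ge> 1) \<Longrightarrow> n \<ge> 1 \<Longrightarrow> S ks n \<le> 2 ^ length ks * sqrt (real n)"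
proof (induction ks arbitrary: n)
  case Nil then show ?case by simp
next
  case (Cons a ks)
  have "S (a#ks) n = (\<Sum>m=1..n. S ks m / real m ^ a)" by simp
  also have "\<dots> \<le> (\<Sum>m=1..n. 2 ^ length ks * (1 / sqrt (real m)))"
  proof (intro sum_mono)
    fix m assume m: "m \<in> {1..n}"
    have a: "a \<ge> 1" using Cons.prems by simp
    have "S ks m / real m ^ a \<le> S ks m / real m"
    proof (intro divide_left_mono)
      show "0 \<le> S ks m" using m by (intro SW_nonneg) auto
      show "real m \<le> real m ^ a" using m a by (metis One_nat_def atLeastAtMost_iff of_nat_le_iff of_nat_power power_increasing power_one_right)
    qed (use m in auto)
    also have "\<dots> \<le> 2 ^ length ks * sqrt (real m) / real m"
      using Cons m by (intro divide_right_mono) auto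
    also have "\<dots> = 2 ^ length ks * (1 / sqrt (real m))"
      using m by (simp add: field_simps)
    finally show "S ks m / real m ^ a \<le> 2 ^ length ks * (1 / sqrt (real m))" .
  qed
  also have "\<dots> = 2 ^ length ks * (\<Sum>m=1..n. 1 / sqrt (real m))" by (simp add: sum_distrib_left)
  also have "\<dots> \<le> 2 ^ length ks * (2 * sqrt (real n))" by (intro mult_left_mono sqrt_sum) auto
  finally show ?case by simp
qed

definition C32 :: real where "C32 = suminf (\<lambda>n. real n powr (-3/2))"

lemma summable32: "summable (\<lambda>n. real n powr (-3/2))"
  by (subst summable_real_powr_iff) simp

lemma sum32: "(\<Sum>m=1..N. sqrt (real m) / real m ^ 2) \<le> C32"
proof -
  have "(\<Sum>m=1..N. sqrt (real m) / real m ^ 2) = (\<Sum>m=1..N. real m powr (-3/2))"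
  proof (intro sum.cong refl)
    fix m assume m: "m \<in> {1..N}"
    then have "real m > 0" by simp
    have e: "(-3/2::real) = 1/2 - 2" by simp
    have "real m powr (-3/2) = real m powr (1/2) / real m powr 2"
      unfolding e by (rule powr_diff)
    also have "\<dots> = sqrt (real m) / real m ^ 2" using \<open>real m > 0\<close> by (simp add: powr_half_sqrt powr_realpow)
    finally show "sqrt (real m) / real m ^ 2 = real m powr (-3/2)" by simp
  qed
  also have "\<dots> \<le> (\<Sum>m<Suc N. real m powr (-3/2))" by (intro sum_mono2) auto
  also have "\<dots> \<le> C32" unfolding C32_def by (intro sum_le_suminf summable32) auto
  finally show ?thesis .
qed

lemma S_adm_bound: "admissible ks \<Longrightarrow> S ks N \<le> 2 ^ length ks * C32"
proof -
  assume adm: "admissible ks"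
  then obtain a rest where ks: "ks = a # rest" "a \<ge> 2" "\<forall>k\<in>set rest. k \<ge> 1"
    unfolding admissible_def by (cases ks) auto
  have "S ks N = (\<Sum>m=1..N. S rest m / real m ^ a)" using ks by simp
  also have "\<dots> \<le> (\<Sum>m=1..N. 2 ^ length rest * (sqrt (real m) / real m ^ 2))"
  proof (intro sum_mono)
    fix m assume m: "m \<in> {1..N}"
    have "S rest m / real m ^ a \<le> S rest m / real m ^ 2"
      using m ks(2) by (intro divide_left_mono SW_nonneg) (auto intro!: power_increasing)
    also have "\<dots> \<le> 2 ^ length rest * sqrt (real m) / real m ^ 2"
      using S_sqrt[OF ks(3)] m by (intro divide_right_mono) auto
    finally show "S rest m / real m ^ a \<le> 2 ^ length rest * (sqrt (real m) / real m ^ 2)" by simp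
  qed
  also have "\<dots> = 2 ^ length rest * (\<Sum>m=1..N. sqrt (real m) / real m ^ 2)" by (simp add: sum_distrib_left)
  also have "\<dots> \<le> 2 ^ length rest * C32" by (intro mult_left_mono sum32) auto
  also have "\<dots> \<le> 2 ^ length ks * C32"
  proof (intro mult_right_mono)
    show "0 \<le> C32" unfolding C32_def by (intro suminf_nonneg summable32) auto
  qed (use ks in auto)
  finally show ?thesis .
qed

definition good :: "nat list \<Rightarrow> bool" where "good p \<longleftrightarrow> p = [] \<or> admissible p"

lemma good_bound: "good p \<Longrightarrow> \<exists>B. \<forall>N. S p N \<le> B"
  unfolding good_def using S_adm_bound by auto

lemma S_incseq: "incseq (S ks)"
proof (cases ks)
  case Nil then show ?thesis by (simp add: incseq_def)
next
  case (Cons a ks')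
  show ?thesis unfolding incseq_def Cons
  proof (intro allI impI)
    fix m n :: nat assume "m \<le> n"
    then show "S (a#ks') m \<le> S (a#ks') n"
      by (simp, intro sum_mono2) (auto intro!: divide_nonneg_pos SW_nonneg)
  qed
qed


definition Bs :: "nat list \<Rightarrow> nat \<Rightarrow> nat list set" where
  "Bs ks N = {ns \<in> zs_indices ks. \<forall>x\<in>set ns. x \<le> N}"

definition fz :: "nat list \<Rightarrow> nat list \<Rightarrow> real" where
  "fz ks = (\<lambda>ns. \<Prod>i<length ks. 1 / real (ns ! i) ^ (ks ! i))"

lemma zeta_star_fz: "zeta_star ks = infsum (fz ks) (zs_indices ks)"
  unfolding zeta_star_def fz_def by simp

lemma Bs_finite: "finite (Bs ks N)"
proof (rule finite_subset)
  show "Bs ks N \<subseteq> {ns. set ns \<subseteq> {0..N} \<and> length ns = length ks}"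
    unfolding Bs_def zs_indices_def by auto
  show "finite {ns. set ns \<subseteq> {0..N} \<and> length ns = length ks}"
    by (rule finite_lists_length_eq) simp
qed

lemma Bs_Nil: "Bs [] N = {[]}"
  unfolding Bs_def zs_indices_def by auto

lemma Bs_Cons: "Bs (a#ks) N = (\<lambda>(n,ns). n#ns) ` (SIGMA n:{1..N}. Bs ks n)"
proof (intro set_eqI iffI)
  fix x assume "x \<in> Bs (a#ks) N"
  then obtain n ns where x: "x = n # ns" "length ns = length ks" "sorted_wrt (\<ge>) (n#ns)"
     "\<forall>y\<in>set (n#ns). y \<ge> 1" "\<forall>y\<in>set (n#ns). y \<le> N"
    unfolding Bs_def zs_indices_def by (cases x) auto
  then have "(n, ns) \<in> (SIGMA n:{1..N}. Bs ks n)"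
    unfolding Bs_def zs_indices_def by auto
  then show "x \<in> (\<lambda>(n,ns). n#ns) ` (SIGMA n:{1..N}. Bs ks n)" using x by force
next
  fix x assume "x \<in> (\<lambda>(n,ns). n#ns) ` (SIGMA n:{1..N}. Bs ks n)"
  then obtain n ns where x: "x = n # ns" "n \<in> {1..N}" "ns \<in> Bs ks n" by auto
  then show "x \<in> Bs (a#ks) N" unfolding Bs_def zs_indices_def by auto
qed

lemma fz_Cons: "fz (a#ks) (n#ns) = 1 / real n ^ a * fz ks ns"
  unfolding fz_def by (simp only: length_Cons prod.lessThan_Suc_shift nth_Cons_0 nth_Cons_Suc)

lemma sum_Bs: "sum (fz ks) (Bs ks N) = S ks N"
proof (induction ks arbitrary: N)
  case Nil then show ?case by (simp add: Bs_Nil fz_def)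
next
  case (Cons a ks)
  have inj: "inj_on (\<lambda>(n,ns). n#ns) (SIGMA n:{1..N}. Bs ks n)" by (auto simp: inj_on_def)
  have "sum (fz (a#ks)) (Bs (a#ks) N) = (\<Sum>(n,ns)\<in>(SIGMA n:{1..N}. Bs ks n). fz (a#ks) (n#ns))"
    unfolding Bs_Cons by (subst sum.reindex[OF inj]) (simp add: case_prod_unfold)
  also have "\<dots> = (\<Sum>n=1..N. \<Sum>ns\<in>Bs ks n. fz (a#ks) (n#ns))"
    by (rule sum.Sigma[symmetric]) (auto simp: Bs_finite)
  also have "\<dots> = (\<Sum>n=1..N. S ks n / real n ^ a)"
    by (intro sum.cong refl) (simp add: fz_Cons sum_divide_distrib[symmetric] Cons.IH)
  finally show ?case by simp
qed

lemma fz_nonneg: "0 \<le> fz ks ns"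
  unfolding fz_def by (intro prod_nonneg) auto

lemma zeta_lim:
  assumes bd: "\<And>N. S ks N \<le> Bd"
  shows "S ks \<longlonglongrightarrow> zeta_star ks"
proof -
  let ?A = "zs_indices ks"
  have sub: "\<exists>N. F \<subseteq> Bs ks N" if "finite F" "F \<subseteq> ?A" for F
  proof -
    define M where "M = Max (insert 0 (\<Union>ns\<in>F. set ns))"
    have fin: "finite (insert 0 (\<Union>ns\<in>F. set ns))" using that by auto
    have M: "x \<le> M" if "ns \<in> F" "x \<in> set ns" for ns x
      unfolding M_def using that by (intro Max_ge[OF fin]) auto
    have "F \<subseteq> Bs ks M"
    proof
      fix ns assume "ns \<in> F"
      then show "ns \<in> Bs ks M" using that(2) M unfolding Bs_def by blast
    qed
    then show ?thesis by blast
  qed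
  have le: "sum (fz ks) F \<le> Bd" if F: "finite F" "F \<subseteq> ?A" for F
  proof -
    obtain N where N: "F \<subseteq> Bs ks N" using sub[OF F] by blast
    have "sum (fz ks) F \<le> sum (fz ks) (Bs ks N)" by (rule sum_mono2[OF Bs_finite N fz_nonneg])
    also have "\<dots> = S ks N" by (rule sum_Bs)
    also have "\<dots> \<le> Bd" by (rule bd)
    finally show ?thesis .
  qed
  have summ: "fz ks summable_on ?A"
  proof (rule nonneg_bdd_above_summable_on)
    show "bdd_above (sum (fz ks) ` {F. F \<subseteq> ?A \<and> finite F})"
      by (rule bdd_aboveI2[where M=Bd]) (use le in blast)
  qed (rule fz_nonneg)
  have eq: "zeta_star ks = (SUP F\<in>{F. finite F \<and> F \<subseteq> ?A}. sum (fz ks) F)"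
    unfolding zeta_star_fz by (rule infsum_nonneg_is_SUPREMUM_real[OF summ fz_nonneg])
  have bdd1: "bdd_above (range (S ks))" by (rule bdd_aboveI2[where M=Bd]) (rule bd)
  have bdd2: "bdd_above ((\<lambda>F. sum (fz ks) F) ` {F. finite F \<and> F \<subseteq> ?A})"
    by (rule bdd_aboveI2[where M=Bd]) (use le in blast)
  have lim: "S ks \<longlonglongrightarrow> (SUP N. S ks N)" by (rule LIMSEQ_incseq_SUP[OF bdd1 S_incseq])
  have "(SUP N. S ks N) = (SUP F\<in>{F. finite F \<and> F \<subseteq> ?A}. sum (fz ks) F)"
  proof (rule antisym)
    show "(SUP N. S ks N) \<le> (SUP F\<in>{F. finite F \<and> F \<subseteq> ?A}. sum (fz ks) F)"
    proof (rule cSUP_least)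
      fix N
      have "Bs ks N \<in> {F. finite F \<and> F \<subseteq> ?A}" using Bs_finite by (auto simp: Bs_def)
      then have "sum (fz ks) (Bs ks N) \<le> (SUP F\<in>{F. finite F \<and> F \<subseteq> ?A}. sum (fz ks) F)"
        by (rule cSUP_upper[OF _ bdd2])
      then show "S ks N \<le> (SUP F\<in>{F. finite F \<and> F \<subseteq> ?A}. sum (fz ks) F)" by (simp add: sum_Bs)
    qed simp
    show "(SUP F\<in>{F. finite F \<and> F \<subseteq> ?A}. sum (fz ks) F) \<le> (SUP N. S ks N)"
    proof (rule cSUP_least)
      show "{F. finite F \<and> F \<subseteq> ?A} \<noteq> {}" by auto
      fix F assume F: "F \<in> {F. finite F \<and> F \<subseteq> ?A}"
      have F1: "finite F" "F \<subseteq> ?A" using F by auto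
      obtain N where N: "F \<subseteq> Bs ks N" using sub[OF F1] by blast
      have "sum (fz ks) F \<le> sum (fz ks) (Bs ks N)" by (rule sum_mono2[OF Bs_finite N fz_nonneg])
      also have "\<dots> = S ks N" by (rule sum_Bs)
      also have "\<dots> \<le> (SUP N. S ks N)" by (rule cSUP_upper[OF _ bdd1]) simp
      finally show "sum (fz ks) F \<le> (SUP N. S ks N)" .
    qed
  qed
  then show ?thesis using lim eq by simp
qed


lemma good_lim: "good p \<Longrightarrow> S p \<longlonglongrightarrow> zeta_star p"
  using good_bound zeta_lim by blast

lemma S_le_zeta: "good p \<Longrightarrow> S p N \<le> zeta_star p"
  by (rule incseq_le[OF S_incseq good_lim])

lemma zeta_le: "good p \<Longrightarrow> (\<And>N. N \<ge> 1 \<Longrightarrow> S p N \<le> B) \<Longrightarrow> zeta_star p \<le> B"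
  by (rule LIMSEQ_le_const2[OF good_lim]) auto

lemma zeta_Nil: "zeta_star [] = 1"
proof -
  have e: "S [] = (\<lambda>N. 1)" by (rule ext) simp
  have "(\<lambda>N::nat. 1::real) \<longlonglongrightarrow> zeta_star []" using good_lim[of "[]"] unfolding e by (simp add: good_def)
  then show ?thesis by (simp add: LIMSEQ_const_iff)
qed

lemma good_snoc: "good p \<Longrightarrow> a \<ge> 2 \<or> (p \<noteq> [] \<and> a \<ge> 1) \<Longrightarrow> admissible (p @ [a])"
  unfolding good_def admissible_def by (cases p) auto

lemma adm_good: "admissible p \<Longrightarrow> good p" by (simp add: good_def)

lemma S_single_ge1: "m \<ge> 1 \<Longrightarrow> S [a] m \<ge> 1"
proof -
  assume m: "m \<ge> 1"
  have "1 / real 1 ^ a \<le> (\<Sum>j=1..m. 1 / real j ^ a)"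
    using m by (intro member_le_sum) auto
  then show ?thesis by simp
qed

lemma S_single_mono: "1 \<le> m \<Longrightarrow> m \<le> m' \<Longrightarrow> S [a] m - 1 \<le> S [a] m' - 1"
  using S_incseq[of "[a]"] by (simp add: incseq_def)

lemma S_snoc_diff: "S (p @ [a]) N - S p N = SW (\<lambda>m. S [a] m - 1) p N"
  by (simp add: SW_app SW_diff[symmetric])

lemma zeta_strict:
  assumes gp: "good p" and gpa: "good (p @ [a])"
  shows "zeta_star p < zeta_star (p @ [a])"
proof -
  let ?g = "\<lambda>m. S [a] m - 1"
  have gnn: "\<And>m. m \<ge> 1 \<Longrightarrow> 0 \<le> ?g m" using S_single_ge1 by simp
  have g2: "?g 2 > 0" by (simp add: numeral_2_eq_2)
  have c: "SW ?g p 2 > 0" by (rule SW_pos[where w="\<lambda>m. S [a] m - 1" and n=2 and ks=p]) (use gnn g2 in auto)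
  have ev: "\<forall>\<^sub>F N in sequentially. SW ?g p 2 \<le> S (p @ [a]) N - S p N"
  proof (rule eventually_sequentiallyI[of 2])
    fix N :: nat assume "2 \<le> N"
    then show "SW ?g p 2 \<le> S (p @ [a]) N - S p N"
      unfolding S_snoc_diff by (intro SW_mono_n[OF gnn S_single_mono]) auto
  qed
  have "(\<lambda>N. S (p @ [a]) N - S p N) \<longlonglongrightarrow> zeta_star (p @ [a]) - zeta_star p"
    by (intro tendsto_diff good_lim gp gpa)
  then have "SW ?g p 2 \<le> zeta_star (p @ [a]) - zeta_star p"
    using ev by (rule tendsto_lowerbound) simp
  then show ?thesis using c by linarith
qed

lemma S_single_tail: "m \<ge> 1 \<Longrightarrow> S [a + 2] m - 1 \<le> (1/2) ^ a * S [2] m"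
proof (induction m)
  case 0 then show ?case by simp
next
  case (Suc m)
  show ?case
  proof (cases "m = 0")
    case True then show ?thesis by simp
  next
    case False
    have IH: "S [a + 2] m - 1 \<le> (1/2) ^ a * S [2] m" using Suc.IH False by simp
    have t: "1 / real (Suc m) ^ (a + 2) \<le> (1/2) ^ a * (1 / real (Suc m) ^ 2)"
    proof -
      have "1 / real (Suc m) ^ (a + 2) = (1 / real (Suc m)) ^ a * (1 / real (Suc m) ^ 2)"
        by (simp add: power_add power_divide power2_eq_square)
      also have "\<dots> \<le> (1/2) ^ a * (1 / real (Suc m) ^ 2)"
        using False by (intro mult_right_mono power_mono) auto
      finally show ?thesis .
    qed
    have "S [a + 2] (Suc m) - 1 = (S [a + 2] m - 1) + 1 / real (Suc m) ^ (a + 2)" by simp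
    also have "\<dots> \<le> (1/2) ^ a * S [2] m + (1/2) ^ a * (1 / real (Suc m) ^ 2)" using IH t by linarith
    also have "\<dots> = (1/2) ^ a * S [2] (Suc m)" by (simp add: algebra_simps)
    finally show ?thesis .
  qed
qed

lemma zeta_lim_a:
  assumes gp: "good p"
  shows "(\<lambda>a. zeta_star (p @ [a + 2])) \<longlonglongrightarrow> zeta_star p"
proof -
  have g2: "good (p @ [a + 2])" for a using good_snoc[OF gp] adm_good by simp
  have g22: "good (p @ [2])" using good_snoc[OF gp, of 2] adm_good by simp
  have up: "zeta_star (p @ [a + 2]) - zeta_star p \<le> (1/2) ^ a * zeta_star (p @ [2])" for a
  proof -
    have "(\<lambda>N. S (p @ [a+2]) N - S p N) \<longlonglongrightarrow> zeta_star (p @ [a+2]) - zeta_star p"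
      by (intro tendsto_diff good_lim gp g2)
    moreover have "\<forall>\<^sub>F N in sequentially. S (p @ [a+2]) N - S p N \<le> (1/2) ^ a * zeta_star (p @ [2])"
    proof (rule eventually_sequentiallyI[of 1])
      fix N :: nat assume N: "1 \<le> N"
      have "S (p @ [a+2]) N - S p N = SW (\<lambda>m. S [a+2] m - 1) p N" by (rule S_snoc_diff)
      also have "\<dots> \<le> SW (\<lambda>m. (1/2) ^ a * S [2] m) p N"
        using N by (intro SW_mono_w S_single_tail) auto
      also have "\<dots> = (1/2) ^ a * S (p @ [2]) N" by (simp only: SW_scale SW_app)
      also have "\<dots> \<le> (1/2) ^ a * zeta_star (p @ [2])"
        using g22 by (intro mult_left_mono S_le_zeta) auto
      finally show "S (p @ [a+2]) N - S p N \<le> (1/2) ^ a * zeta_star (p @ [2])" .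
    qed
    ultimately show ?thesis by (rule tendsto_upperbound) simp
  qed
  have lo: "zeta_star p \<le> zeta_star (p @ [a + 2])" for a
    using zeta_strict[OF gp g2] by (simp add: less_imp_le)
  have "(\<lambda>a. (1/2::real) ^ a * zeta_star (p @ [2])) \<longlonglongrightarrow> 0 * zeta_star (p @ [2])"
    by (intro tendsto_mult tendsto_const LIMSEQ_power_zero) simp
  then have l0: "(\<lambda>a. zeta_star p + (1/2::real) ^ a * zeta_star (p @ [2])) \<longlonglongrightarrow> zeta_star p"
    using tendsto_add[OF tendsto_const] by fastforce
  show ?thesis
  proof (rule tendsto_sandwich[OF _ _ tendsto_const l0])
    show "\<forall>\<^sub>F n in sequentially. zeta_star p \<le> zeta_star (p @ [n + 2])" using lo by simp
    show "\<forall>\<^sub>F n in sequentially. zeta_star (p @ [n + 2]) \<le> zeta_star p + (1/2) ^ n * zeta_star (p @ [2])"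
      using up by (simp add: algebra_simps)
  qed
qed

lemma SW_real_2: "SW real [2] N = harm N"
proof -
  have "real m / real m ^ 2 = inverse (real m)" for m by (cases "m = 0") (auto simp: power2_eq_square field_simps)
  then show ?thesis unfolding harm_def by simp
qed

lemma SW_real_app_le:
  assumes "\<forall>k\<in>set q. k \<ge> 1" "N \<ge> 1"
  shows "SW real (p @ q) N \<le> SW real p N"
proof -
  have "SW real q m \<le> real m" if "m \<ge> 1" for m
  proof -
    have "list_all2 (\<le>) (replicate (length q) 1) q"
      using assms(1) by (auto simp: list_all2_conv_all_nth)
    then have "SW real q m \<le> SW real (replicate (length q) 1) m"
      using that by (intro SW_mono_exp) auto
    then show ?thesis using SW_id_ones[of "length q" m] by linarith
  qed
  then show ?thesis unfolding SW_app using assms(2) by (intro SW_mono_w) auto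
qed

lemma S_le_SW_real: "N \<ge> 1 \<Longrightarrow> S p N \<le> SW real p N"
  by (intro SW_mono_w) auto

lemma SW_real_snoc: "b \<ge> 1 \<Longrightarrow> SW real (p @ [b]) N = S (p @ [b - 1]) N"
proof -
  assume b: "b \<ge> 1"
  have "SW real [b] = S [b - 1]" using SW_id_single[OF b] by (intro ext) simp
  then show ?thesis by (simp add: SW_app)
qed

lemma S_one: "S ks 1 = 1"
  by (induction ks) auto

lemma zeta_ge1: "admissible ks \<Longrightarrow> zeta_star ks \<ge> 1"
  using S_le_zeta[of ks 1] S_one adm_good by simp


lemma seqT_D: "k \<in> seqT \<Longrightarrow> k 0 \<ge> 2 \<and> (\<forall>i. k i \<ge> 1)"
  unfolding seqT_def by auto

lemma seqT_adm: "k \<in> seqT \<Longrightarrow> r \<ge> 1 \<Longrightarrow> admissible (map k [0..<r])"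
proof -
  assume k: "k \<in> seqT" and r: "r \<ge> 1"
  then obtain r' where r': "r = Suc r'" by (cases r) auto
  have "[0..<r] = 0 # [1..<r]" using r by (simp add: upt_conv_Cons)
  then show ?thesis using seqT_D[OF k] unfolding admissible_def by auto
qed

lemma seqT_good: "k \<in> seqT \<Longrightarrow> good (map k [0..<r])"
  using seqT_adm[of k r] by (cases r) (auto simp: good_def)

lemma Zk_strict: "k \<in> seqT \<Longrightarrow> zeta_star (map k [0..<r]) < zeta_star (map k [0..<Suc r])"
  using zeta_strict[OF seqT_good[of k r]] seqT_good[of k "Suc r"] by simp

lemma Zk_incseq: "k \<in> seqT \<Longrightarrow> incseq (\<lambda>r. zeta_star (map k [0..<r]))"
  using Zk_strict by (intro incseq_SucI less_imp_le) auto

lemma seqT_s: "k \<in> seqT \<Longrightarrow> \<exists>s. k s \<ge> 2 \<and> (s = 0 \<longrightarrow> k 0 \<ge> 3)"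
proof -
  assume k: "k \<in> seqT"
  show ?thesis
  proof (cases "k 0 = 2")
    case True
    then obtain s where "s \<ge> 1" "k s \<ge> 2" using k unfolding seqT_def by auto
    then show ?thesis by auto
  next
    case False
    then show ?thesis using seqT_D[OF k] by (intro exI[of _ 0]) auto
  qed
qed

lemma pk_split: "r \<ge> s \<Longrightarrow> map k [0..<r] = map k [0..<s] @ map k [s..<r]"
  by (metis map_append le0 upt_add_eq_append le_add_diff_inverse)

lemma top_bound:
  assumes k: "k \<in> seqT" and r: "r \<ge> Suc s" and N: "N \<ge> 1"
  shows "S (map k [0..<r]) N \<le> S (map k [0..<s] @ [k s - 1]) N"
proof -
  have 1: "\<forall>x\<in>set (map k [Suc s..<r]). x \<ge> 1" using seqT_D[OF k] by auto
  have "S (map k [0..<r]) N \<le> SW real (map k [0..<r]) N" by (rule S_le_SW_real[OF N])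
  also have "\<dots> = SW real (map k [0..<Suc s] @ map k [Suc s..<r]) N" by (simp only: pk_split[OF r])
  also have "\<dots> \<le> SW real (map k [0..<Suc s]) N" by (rule SW_real_app_le[OF 1 N])
  also have "\<dots> = SW real (map k [0..<s] @ [k s]) N" by simp
  also have "\<dots> = S (map k [0..<s] @ [k s - 1]) N" using seqT_D[OF k] by (intro SW_real_snoc) auto
  finally show ?thesis .
qed

lemma s_adm: "k \<in> seqT \<Longrightarrow> k s \<ge> 2 \<Longrightarrow> (s = 0 \<longrightarrow> k 0 \<ge> 3) \<Longrightarrow> admissible (map k [0..<s] @ [k s - 1])"
proof -
  assume k: "k \<in> seqT" and s: "k s \<ge> 2" "s = 0 \<longrightarrow> k 0 \<ge> 3"
  have "k s - 1 \<ge> 2 \<or> (map k [0..<s] \<noteq> [] \<and> k s - 1 \<ge> 1)"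
  proof (cases "s = 0")
    case True then show ?thesis using s by simp
  next
    case False
    have "k s - 1 \<ge> 1" using s by linarith
    then show ?thesis using False by simp
  qed
  then show ?thesis by (rule good_snoc[OF seqT_good[OF k]])
qed

lemma Zk_bounded: "k \<in> seqT \<Longrightarrow> \<exists>B. \<forall>r. zeta_star (map k [0..<r]) \<le> B"
proof -
  assume k: "k \<in> seqT"
  obtain s where s: "k s \<ge> 2" "s = 0 \<longrightarrow> k 0 \<ge> 3" using seqT_s[OF k] by blast
  let ?q = "map k [0..<s] @ [k s - 1]"
  have "zeta_star (map k [0..<r]) \<le> zeta_star ?q" for r
  proof -
    have "zeta_star (map k [0..<r]) \<le> zeta_star (map k [0..<r + Suc s])"
      by (rule monoD[OF Zk_incseq[OF k]]) simp
    also have "\<dots> \<le> zeta_star ?q"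
    proof (rule zeta_le[OF seqT_good[OF k]])
      fix N :: nat assume N: "N \<ge> 1"
      have "S (map k [0..<r + Suc s]) N \<le> S ?q N" by (rule top_bound[OF k _ N]) simp
      also have "\<dots> \<le> zeta_star ?q" by (intro S_le_zeta adm_good s_adm k s)
      finally show "S (map k [0..<r + Suc s]) N \<le> zeta_star ?q" .
    qed
    finally show ?thesis .
  qed
  then show ?thesis by blast
qed

lemma Zk_lim: "k \<in> seqT \<Longrightarrow> (\<lambda>r. zeta_star (map k [0..<r])) \<longlonglongrightarrow> eta k"
proof -
  assume k: "k \<in> seqT"
  obtain B where B: "\<And>r. zeta_star (map k [0..<r]) \<le> B" using Zk_bounded[OF k] by blast
  have "bdd_above (range (\<lambda>r. zeta_star (map k [0..<r])))" by (rule bdd_aboveI2[where M=B]) (rule B)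
  then have "convergent (\<lambda>r. zeta_star (map k [0..<r]))"
    using LIMSEQ_incseq_SUP[OF _ Zk_incseq[OF k]] by (auto simp: convergent_def)
  then show ?thesis unfolding eta_def by (rule convergent_LIMSEQ_iff[THEN iffD1])
qed

lemma Zk_less_eta: "k \<in> seqT \<Longrightarrow> zeta_star (map k [0..<r]) < eta k"
proof -
  assume k: "k \<in> seqT"
  have "zeta_star (map k [0..<Suc r]) \<le> eta k" by (rule incseq_le[OF Zk_incseq[OF k] Zk_lim[OF k]])
  then show ?thesis using Zk_strict[OF k, of r] by linarith
qed

lemma eta_gt1: "k \<in> seqT \<Longrightarrow> eta k > 1"
  using Zk_less_eta[of k 0] zeta_Nil by simp

lemma succT_less:
  assumes k: "k \<in> seqT" and m: "m \<in> seqT" and st: "succT k m"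
  shows "eta m < eta k"
proof -
  obtain j where j: "\<forall>i<j. k i = m i" "k j < m j" using st unfolding succT_def by blast
  have pj: "map m [0..<j] = map k [0..<j]" using j(1) by (intro map_cong) auto
  have bnd: "zeta_star (map m [0..<r]) \<le> zeta_star (map k [0..<Suc j])" if r: "r \<ge> Suc j" for r
  proof (rule zeta_le[OF seqT_good[OF m]])
    fix N :: nat assume N: "N \<ge> 1"
    have "S (map m [0..<r]) N \<le> S (map m [0..<j] @ [m j - 1]) N" by (rule top_bound[OF m r N])
    also have "\<dots> \<le> S (map k [0..<j] @ [k j]) N"
    proof (unfold pj, rule SW_mono_exp)
      show "list_all2 (\<le>) (map k [0..<j] @ [k j]) (map k [0..<j] @ [m j - 1])"
        using j(2) by (intro list_all2_appendI) (auto simp: list_all2_refl)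
    qed (use N in auto)
    also have "\<dots> = S (map k [0..<Suc j]) N" by simp
    also have "\<dots> \<le> zeta_star (map k [0..<Suc j])" by (rule S_le_zeta[OF seqT_good[OF k]])
    finally show "S (map m [0..<r]) N \<le> zeta_star (map k [0..<Suc j])" .
  qed
  have "eta m \<le> zeta_star (map k [0..<Suc j])"
    by (rule LIMSEQ_le_const2[OF Zk_lim[OF m]]) (use bnd in auto)
  also have "\<dots> < eta k" by (rule Zk_less_eta[OF k])
  finally show ?thesis .
qed

lemma not_succT: "\<not> succT k m \<Longrightarrow> k \<noteq> m \<Longrightarrow> succT m k"
proof -
  assume ns: "\<not> succT k m" and ne: "k \<noteq> m"
  then obtain i where "k i \<noteq> m i" by auto
  define j where "j = (LEAST i. k i \<noteq> m i)"
  have jn: "k j \<noteq> m j" unfolding j_def by (rule LeastI) fact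
  have jl: "\<forall>i<j. k i = m i" unfolding j_def using not_less_Least by blast
  have "\<not> k j < m j" using ns jl unfolding succT_def by blast
  then have "m j < k j" using jn by simp
  then show ?thesis unfolding succT_def using jl by (intro exI[of _ j]) auto
qed

lemma order_iff: "k \<in> seqT \<Longrightarrow> m \<in> seqT \<Longrightarrow> succT k m \<longleftrightarrow> eta k > eta m"
proof
  assume "k \<in> seqT" "m \<in> seqT" "succT k m" then show "eta k > eta m" using succT_less by blast
next
  assume k: "k \<in> seqT" and m: "m \<in> seqT" and lt: "eta k > eta m"
  show "succT k m"
  proof (rule ccontr)
    assume ns: "\<not> succT k m"
    have "k \<noteq> m" using lt by auto
    then have "succT m k" using not_succT[OF ns] by blast
    then have "eta k < eta m" using succT_less[OF m k] by blast
    then show False using lt by simp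
  qed
qed

lemma eta_inj: "inj_on eta seqT"
proof (rule inj_onI)
  fix k m assume k: "k \<in> seqT" and m: "m \<in> seqT" and e: "eta k = eta m"
  show "k = m"
  proof (rule ccontr)
    assume ne: "k \<noteq> m"
    show False
    proof (cases "succT k m")
      case True then show False using succT_less[OF k m] e by simp
    next
      case False then have "succT m k" using not_succT ne by blast
      then show False using succT_less[OF m k] e by simp
    qed
  qed
qed


lemma pk_Cons: "map k [0..<Suc r] = k 0 # map (\<lambda>i. k (Suc i)) [0..<r]"
  by (induction r) auto

lemma gap:
  assumes k: "k \<in> seqT" and e: "\<epsilon> > 0"
  shows "\<exists>R. \<forall>r\<ge>R. \<forall>N. SW (\<lambda>m. real m - 1) (map k [0..<r]) N \<le> \<epsilon>"
proof -
  obtain s where s: "k s \<ge> 2" "s = 0 \<longrightarrow> k 0 \<ge> 3" using seqT_s[OF k] by blast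
  let ?q = "map k [0..<s] @ [k s - 1]"
  let ?w = "\<lambda>m. real m - 1"
  define kt where "kt = (\<lambda>i. k (Suc i))"
  define g where "g n = SW real (map kt [0..<s]) n" for n
  define h where "h n = g n / real n ^ k 0" for n
  define P where "P N = (\<Sum>n=1..N. h n)" for N
  have kt1: "\<forall>x\<in>set (map kt xs). x \<ge> 1" for xs using seqT_D[OF k] unfolding kt_def by auto
  have hnn: "h n \<ge> 0" if "n \<ge> 1" for n
    unfolding h_def g_def using that by (intro divide_nonneg_nonneg SW_nonneg) auto
  have P_eq: "P N = S ?q N" for N
  proof -
    have "P N = SW real (map k [0..<Suc s]) N"
      unfolding P_def h_def g_def pk_Cons kt_def by simp
    also have "\<dots> = SW real (map k [0..<s] @ [k s]) N" by simp
    also have "\<dots> = S ?q N" using s by (intro SW_real_snoc) auto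
    finally show ?thesis .
  qed
  have P_bd: "P N \<le> zeta_star ?q" for N
    unfolding P_eq by (intro S_le_zeta adm_good s_adm k s)
  have P_inc: "incseq P"
  proof (rule incseq_SucI)
    fix N show "P N \<le> P (Suc N)" unfolding P_def using hnn[of "Suc N"] by simp
  qed
  have "bdd_above (range P)" by (rule bdd_aboveI2[where M="zeta_star ?q"]) (rule P_bd)
  then have Plim: "P \<longlonglongrightarrow> (SUP N. P N)" by (rule LIMSEQ_incseq_SUP[OF _ P_inc])
  define V where "V = (SUP N. P N)"
  have PV: "P N \<le> V" for N unfolding V_def by (rule incseq_le[OF P_inc Plim])
  have "\<forall>\<^sub>F N in sequentially. V - \<epsilon>/2 < P N"
    using Plim unfolding V_def[symmetric] by (rule order_tendstoD(1)) (use e in simp)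
  then obtain M where M: "V - \<epsilon>/2 < P M" by (auto simp: eventually_sequentially)
  have "(\<lambda>t. \<Sum>n=1..M. dd t n / real n ^ k 0) \<longlonglongrightarrow> (\<Sum>n=1..M. 0 / real n ^ k 0)"
    by (intro tendsto_sum tendsto_divide tendsto_const dd_lim) auto
  then have "(\<lambda>t. \<Sum>n=1..M. dd t n / real n ^ k 0) \<longlonglongrightarrow> 0" by simp
  then have "\<forall>\<^sub>F t in sequentially. (\<Sum>n=1..M. dd t n / real n ^ k 0) < \<epsilon>/2"
    by (rule order_tendstoD(2)) (use e in simp)
  then obtain R1 where R1: "\<And>t. t \<ge> R1 \<Longrightarrow> (\<Sum>n=1..M. dd t n / real n ^ k 0) < \<epsilon>/2"
    by (auto simp: eventually_sequentially)
  have main: "SW ?w (map k [0..<Suc t]) N \<le> \<epsilon>" if t: "t \<ge> R1" "t \<ge> s" for t N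
  proof -
    define I where "I n = SW ?w (map kt [0..<t]) n / real n ^ k 0" for n
    have eq: "SW ?w (map k [0..<Suc t]) N = (\<Sum>n=1..N. I n)"
      unfolding I_def pk_Cons kt_def by simp
    have Inn: "0 \<le> I n" if "n \<ge> 1" for n
      unfolding I_def using that by (intro divide_nonneg_nonneg SW_nonneg) auto
    have Idd: "I n \<le> dd t n / real n ^ k 0" if n: "n \<ge> 1" for n
    proof -
      have "list_all2 (\<le>) (replicate t 1) (map kt [0..<t])"
        using kt1[of "[0..<t]"] by (auto simp: list_all2_conv_all_nth)
      then have "SW ?w (map kt [0..<t]) n \<le> dd t n"
        unfolding dd_def using n by (intro SW_mono_exp) auto
      then show ?thesis unfolding I_def by (intro divide_right_mono) auto
    qed
    have Ih: "I n \<le> h n" if n: "n \<ge> 1" for n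
    proof -
      have "SW ?w (map kt [0..<t]) n \<le> SW real (map kt [0..<t]) n"
        using n by (intro SW_mono_w) auto
      also have "\<dots> = SW real (map kt [0..<s] @ map kt [s..<t]) n"
        by (simp only: pk_split[OF t(2)])
      also have "\<dots> \<le> g n" unfolding g_def by (rule SW_real_app_le[OF kt1 n])
      finally show ?thesis unfolding I_def h_def by (intro divide_right_mono) auto
    qed
    have split: "(\<Sum>n=1..N. I n) = (\<Sum>n\<in>{1..N} \<inter> {..M}. I n) + (\<Sum>n\<in>{1..N} - {..M}. I n)"
      by (rule sum.Int_Diff) simp
    have A: "(\<Sum>n\<in>{1..N} \<inter> {..M}. I n) < \<epsilon>/2"
    proof -
      have "(\<Sum>n\<in>{1..N} \<inter> {..M}. I n) \<le> (\<Sum>n\<in>{1..N} \<inter> {..M}. dd t n / real n ^ k 0)"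
        by (intro sum_mono Idd) auto
      also have "\<dots> \<le> (\<Sum>n=1..M. dd t n / real n ^ k 0)"
        by (intro sum_mono2) (auto intro!: divide_nonneg_nonneg dd_nonneg)
      also have "\<dots> < \<epsilon>/2" by (rule R1[OF t(1)])
      finally show ?thesis .
    qed
    have B: "(\<Sum>n\<in>{1..N} - {..M}. I n) \<le> \<epsilon>/2"
    proof -
      define N' where "N' = max N M"
      have "(\<Sum>n\<in>{1..N} - {..M}. I n) \<le> (\<Sum>n\<in>{1..N} - {..M}. h n)"
        by (intro sum_mono Ih) auto
      also have "\<dots> \<le> (\<Sum>n\<in>{1..N'} - {..M}. h n)"
        unfolding N'_def by (intro sum_mono2 hnn) auto
      also have "\<dots> = P N' - P M"
      proof -
        have "P N' = (\<Sum>n\<in>{1..N'} \<inter> {..M}. h n) + (\<Sum>n\<in>{1..N'} - {..M}. h n)"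
          unfolding P_def by (rule sum.Int_Diff) simp
        moreover have i: "{1..N'} \<inter> {..M} = {1..M}" unfolding N'_def by auto
        ultimately have "P N' = (\<Sum>n\<in>{1..M}. h n) + (\<Sum>n\<in>{1..N'} - {..M}. h n)" by (simp only: i)
        then show ?thesis unfolding P_def by linarith
      qed
      also have "\<dots> \<le> V - P M" using PV[of N'] by simp
      also have "\<dots> \<le> \<epsilon>/2" using M by simp
      finally show ?thesis .
    qed
    show ?thesis using eq split A B by linarith
  qed
  show ?thesis
  proof (intro exI[of _ "Suc (max R1 s)"] allI impI)
    fix r N assume r: "Suc (max R1 s) \<le> r"
    then obtain t where rt: "r = Suc t" "t \<ge> R1" "t \<ge> s" by (cases r) auto
    show "SW ?w (map k [0..<r]) N \<le> \<epsilon>" unfolding rt(1) by (rule main[OF rt(2,3)])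
  qed
qed


definition UB :: "nat list \<Rightarrow> real \<Rightarrow> bool" where
  "UB p x \<longleftrightarrow> (\<forall>y<x. \<exists>N. y < SW real p N)"

definition oka :: "nat list \<Rightarrow> nat \<Rightarrow> bool" where
  "oka p a \<longleftrightarrow> a \<ge> 1 \<and> (p = [] \<longrightarrow> a \<ge> 2)"

definition chs :: "real \<Rightarrow> nat list \<Rightarrow> nat" where
  "chs x p = (LEAST a. oka p a \<and> zeta_star (p @ [a]) < x)"

primrec pre :: "real \<Rightarrow> nat \<Rightarrow> nat list" where
  "pre x 0 = []"
| "pre x (Suc r) = pre x r @ [chs x (pre x r)]"

definition kg :: "real \<Rightarrow> nat \<Rightarrow> nat" where
  "kg x r = chs x (pre x r)"

lemma exists_a:
  assumes "good p" "zeta_star p < x"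
  shows "\<exists>a. oka p a \<and> zeta_star (p @ [a]) < x"
proof -
  have "\<forall>\<^sub>F a in sequentially. zeta_star (p @ [a + 2]) < x"
    by (rule order_tendstoD(2)[OF zeta_lim_a[OF assms(1)] assms(2)])
  then obtain a where "zeta_star (p @ [a + 2]) < x" by (auto simp: eventually_sequentially)
  moreover have "oka p (a + 2)" by (simp add: oka_def)
  ultimately show ?thesis by blast
qed

lemma choose_props:
  assumes "good p" "zeta_star p < x"
  shows "oka p (chs x p)" "zeta_star (p @ [chs x p]) < x"
    "\<And>b. oka p b \<Longrightarrow> b < chs x p \<Longrightarrow> \<not> zeta_star (p @ [b]) < x"
proof -
  obtain a where a: "oka p a \<and> zeta_star (p @ [a]) < x" using exists_a[OF assms] by blast
  have "oka p (chs x p) \<and> zeta_star (p @ [chs x p]) < x"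
    unfolding chs_def by (rule LeastI[of _ a]) (rule a)
  then show "oka p (chs x p)" "zeta_star (p @ [chs x p]) < x" by auto
  fix b assume "oka p b" "b < chs x p"
  then show "\<not> zeta_star (p @ [b]) < x" unfolding chs_def using not_less_Least by blast
qed

lemma harm_unb: "\<exists>N. (y::real) < harm N"
proof -
  have "\<forall>\<^sub>F N in sequentially. y + 1 \<le> (harm N :: real)"
    using harm_at_top unfolding filterlim_at_top by blast
  then obtain N where "y + 1 \<le> (harm N :: real)" by (auto simp: eventually_sequentially)
  then show ?thesis by (intro exI[of _ N]) simp
qed

lemma inv:
  assumes x: "x > 1"
  shows "good (pre x r) \<and> zeta_star (pre x r) < x \<and> (r \<ge> 1 \<longrightarrow> UB (pre x r) x)"
proof (induction r)
  case 0 then show ?case using x zeta_Nil by (simp add: good_def)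
next
  case (Suc r)
  define p where "p = pre x r"
  define a where "a = chs x p"
  have gp: "good p" and zp: "zeta_star p < x" and ubp: "r \<ge> 1 \<Longrightarrow> UB p x"
    using Suc.IH unfolding p_def by auto
  have oa: "oka p a" and za: "zeta_star (p @ [a]) < x"
    and mn: "\<And>b. oka p b \<Longrightarrow> b < a \<Longrightarrow> \<not> zeta_star (p @ [b]) < x"
    using choose_props[OF gp zp] unfolding a_def by auto
  have adm: "admissible (p @ [a])"
    using oa unfolding oka_def by (intro good_snoc[OF gp]) auto
  have ub: "UB (p @ [a]) x"
  proof (cases "a = 1")
    case True
    then have "p \<noteq> []" using oa unfolding oka_def by auto
    then have "r \<ge> 1" unfolding p_def by (cases r) auto
    then have ubp': "UB p x" by (rule ubp)
    have e: "\<And>N. SW real (p @ [a]) N = SW real p N" unfolding True by (rule SW_id_app1)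
    show ?thesis using ubp' unfolding UB_def e .
  next
    case a1: False
    show ?thesis
    proof (cases "p = [] \<and> a = 2")
      case True
      then have pa: "p @ [a] = [2]" by simp
      show ?thesis unfolding UB_def pa SW_real_2 using harm_unb by blast
    next
      case False
      then have ob: "oka p (a - 1)" using oa a1 unfolding oka_def by auto
      have "a - 1 < a" using oa unfolding oka_def by auto
      then have ge: "x \<le> zeta_star (p @ [a - 1])" using mn[OF ob] by simp
      have gb: "good (p @ [a - 1])"
        using ob unfolding oka_def by (intro adm_good good_snoc[OF gp]) auto
      show ?thesis unfolding UB_def
      proof (intro allI impI)
        fix y assume y: "y < x"
        have "\<forall>\<^sub>F N in sequentially. y < S (p @ [a - 1]) N"
          by (rule order_tendstoD(1)[OF good_lim[OF gb]]) (use y ge in linarith)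
        then obtain N where "y < S (p @ [a - 1]) N" by (auto simp: eventually_sequentially)
        moreover have "SW real (p @ [a]) N = S (p @ [a - 1]) N"
          using oa unfolding oka_def by (intro SW_real_snoc) auto
        ultimately have "y < SW real (p @ [a]) N" by linarith
        then show "\<exists>N. y < SW real (p @ [a]) N" by blast
      qed
    qed
  qed
  show ?case using adm_good[OF adm] za ub unfolding p_def a_def by simp
qed

lemma pre_eq: "pre x r = map (kg x) [0..<r]"
  by (induction r) (auto simp: kg_def)

lemma kg_seqT:
  assumes x: "x > 1"
  shows "kg x \<in> seqT"
proof -
  let ?k = "kg x"
  have ok: "oka (pre x i) (kg x i)" for i
    unfolding kg_def using inv[OF x, of i] by (intro choose_props(1)) auto
  have k1: "?k i \<ge> 1" for i using ok[of i] unfolding oka_def by auto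
  have k0: "?k 0 \<ge> 2" using ok[of 0] unfolding oka_def by simp
  have ks: "\<exists>s\<ge>1. ?k s \<ge> 2" if k02: "?k 0 = 2"
  proof (rule ccontr)
    assume "\<not> (\<exists>s\<ge>1. ?k s \<ge> 2)"
    then have nall: "\<forall>s. s \<ge> 1 \<longrightarrow> \<not> 2 \<le> ?k s" by simp
    have nex: "\<not> 2 \<le> ?k (Suc i)" for i using nall by simp
    have one: "?k (Suc i) = 1" for i using k1[of "Suc i"] nex[of i] by linarith
    have pre_t: "pre x (Suc t) = 2 # replicate t 1" for t
    proof -
      have "(\<lambda>i. ?k (Suc i)) = (\<lambda>i. 1)" using one by (intro ext) simp
      then have "map (\<lambda>i. ?k (Suc i)) [0..<t] = replicate t 1"
        by (simp add: map_replicate_const)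
      then show ?thesis unfolding pre_eq pk_Cons using k02 by simp
    qed
    have lt: "zeta_star (2 # replicate t 1) < x" for t
      using inv[OF x, of "Suc t"] unfolding pre_t by simp
    have hle: "harm N \<le> x" for N
    proof -
      have g: "good (2 # replicate t 1)" for t by (simp add: good_def admissible_def)
      have eq: "S (2 # replicate t 1) N = (\<Sum>m=1..N. S (replicate t 1) m / real m ^ 2)" for t
        by simp
      have "(\<lambda>t. \<Sum>m=1..N. S (replicate t 1) m / real m ^ 2) \<longlonglongrightarrow> (\<Sum>m=1..N. real m / real m ^ 2)"
        by (intro tendsto_sum tendsto_divide tendsto_const S_ones_lim) auto
      moreover have "(\<Sum>m=1..N. real m / real m ^ 2) = harm N" using SW_real_2[of N] by simp
      ultimately have lim: "(\<lambda>t. S (2 # replicate t 1) N) \<longlonglongrightarrow> harm N" unfolding eq by simp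
      have "S (2 # replicate t 1) N \<le> x" for t
        using S_le_zeta[OF g, of t N] lt[of t] by simp
      then show ?thesis by (intro LIMSEQ_le_const2[OF lim]) auto
    qed
    obtain N where "x < harm N" using harm_unb by blast
    then show False using hle[of N] by simp
  qed
  show ?thesis unfolding seqT_def using k0 k1 ks by auto
qed

lemma kg_eta:
  assumes x: "x > 1"
  shows "eta (kg x) = x"
proof -
  let ?k = "kg x"
  have k: "?k \<in> seqT" by (rule kg_seqT[OF x])
  have lt: "zeta_star (map ?k [0..<r]) < x" for r using inv[OF x, of r] unfolding pre_eq by simp
  have le1: "eta ?k \<le> x"
    by (rule LIMSEQ_le_const2[OF Zk_lim[OF k]]) (use lt less_imp_le in auto)
  have le2: "x \<le> eta ?k + e" if e: "e > 0" for e
  proof -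
    obtain R where R: "\<And>r N. r \<ge> R \<Longrightarrow> SW (\<lambda>m. real m - 1) (map ?k [0..<r]) N \<le> e/2"
      using gap[OF k, of "e/2"] e by auto
    define r where "r = max R 1"
    have ub: "UB (map ?k [0..<r]) x" using inv[OF x, of r] unfolding r_def pre_eq by simp
    have "x - e/2 < x" using e by simp
    then obtain N where N: "x - e/2 < SW real (map ?k [0..<r]) N"
      using ub unfolding UB_def by blast
    have dec: "SW real (map ?k [0..<r]) N = S (map ?k [0..<r]) N + SW (\<lambda>m. real m - 1) (map ?k [0..<r]) N"
      using SW_diff[of real "\<lambda>_. 1" "map ?k [0..<r]" N] by simp
    have "S (map ?k [0..<r]) N \<le> zeta_star (map ?k [0..<r])" by (rule S_le_zeta[OF seqT_good[OF k]])
    also have "\<dots> < eta ?k" by (rule Zk_less_eta[OF k])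
    finally have "S (map ?k [0..<r]) N < eta ?k" .
    moreover have "SW (\<lambda>m. real m - 1) (map ?k [0..<r]) N \<le> e/2" using R[of r N] unfolding r_def by simp
    ultimately show ?thesis using N dec by linarith
  qed
  have "x \<le> eta ?k" by (rule field_le_epsilon) (rule le2)
  then show ?thesis using le1 by simp
qed

lemma eta_surj: "eta ` seqT = {1<..}"
proof
  show "eta ` seqT \<subseteq> {1<..}" using eta_gt1 by auto
  show "{1<..} \<subseteq> eta ` seqT"
  proof
    fix x :: real assume "x \<in> {1<..}"
    then have x: "x > 1" by simp
    show "x \<in> eta ` seqT" using kg_eta[OF x] kg_seqT[OF x] by (metis image_eqI)
  qed
qed

lemma derived_sub:
  assumes "\<And>z. z \<in> A \<Longrightarrow> z \<ge> (1::real)"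
  shows "derived_set A \<subseteq> {1..}"
proof
  fix x assume "x \<in> derived_set A"
  then have "x islimpt A" unfolding derived_set_def by simp
  then have "x islimpt {1..}" by (rule islimpt_subset) (use assms in auto)
  then show "x \<in> {1..}" using closed_limpt closed_atLeast by blast
qed

lemma Zstar_ge1: "z \<in> Zstar \<Longrightarrow> z \<ge> 1"
  unfolding Zstar_def using zeta_ge1 by auto

lemma limpt_Zstar: "x \<ge> 1 \<Longrightarrow> x islimpt Zstar"
proof -
  assume x1: "x \<ge> 1"
  show ?thesis
  proof (cases "x = 1")
    case True
    let ?f = "\<lambda>a::nat. zeta_star [a + 2]"
    have in1: "?f a \<in> Zstar - {x}" for a
    proof -
      have adm: "admissible [a + 2]" unfolding admissible_def by auto
      have "zeta_star [] < zeta_star ([] @ [a + 2])"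
        by (rule zeta_strict) (use adm in \<open>auto simp: good_def\<close>)
      then have "?f a > 1" using zeta_Nil by simp
      then show ?thesis using adm True unfolding Zstar_def by auto
    qed
    have "(\<lambda>a. zeta_star ([] @ [a + 2])) \<longlonglongrightarrow> zeta_star []" by (rule zeta_lim_a) (simp add: good_def)
    then have "?f \<longlonglongrightarrow> x" using zeta_Nil True by simp
    then show ?thesis unfolding islimpt_sequential using in1 by (intro exI[of _ ?f]) auto
  next
    case False
    then have x: "x > 1" using x1 by simp
    let ?k = "kg x"
    have k: "?k \<in> seqT" by (rule kg_seqT[OF x])
    let ?f = "\<lambda>r. zeta_star (map ?k [0..<Suc r])"
    have in1: "?f r \<in> Zstar - {x}" for r
    proof -
      have "?f r < x" using Zk_less_eta[OF k, of "Suc r"] kg_eta[OF x] by simp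
      moreover have "admissible (map ?k [0..<Suc r])" by (rule seqT_adm[OF k]) simp
      ultimately show ?thesis unfolding Zstar_def by auto
    qed
    have "?f \<longlonglongrightarrow> eta ?k" using Zk_lim[OF k] by (rule LIMSEQ_Suc)
    then have "?f \<longlonglongrightarrow> x" using kg_eta[OF x] by simp
    then show ?thesis unfolding islimpt_sequential using in1 by (intro exI[of _ ?f]) auto
  qed
qed

lemma derived_Zstar: "derived_set Zstar = {1..}"
proof
  show "derived_set Zstar \<subseteq> {1..}" by (rule derived_sub) (rule Zstar_ge1)
  show "{1..} \<subseteq> derived_set Zstar" using limpt_Zstar unfolding derived_set_def by auto
qed

lemma derived_Ici: "derived_set {1..} = {1::real..}"
proof
  show "derived_set {1..} \<subseteq> {1::real..}" by (rule derived_sub) auto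
  show "{1..} \<subseteq> derived_set {1::real..}"
  proof
    fix x :: real assume x: "x \<in> {1..}"
    let ?f = "\<lambda>n. x + inverse (real (Suc n))"
    have in1: "?f n \<in> {1..} - {x}" for n using x by (auto simp: add_increasing2)
    have "?f \<longlonglongrightarrow> x + 0" by (intro tendsto_add tendsto_const LIMSEQ_inverse_real_of_nat)
    then have "?f \<longlonglongrightarrow> x" by simp
    then have "x islimpt {1..}" unfolding islimpt_sequential using in1 by (intro exI[of _ ?f]) auto
    then show "x \<in> derived_set {1..}" unfolding derived_set_def by simp
  qed
qed

lemma derived_iter: "n \<ge> 1 \<Longrightarrow> (derived_set ^^ n) Zstar = {1..}"
proof (induction n)
  case 0 then show ?case by simp
next
  case (Suc n)
  show ?case
  proof (cases "n = 0")
    case True then show ?thesis by (simp add: derived_Zstar)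
  next
    case False then show ?thesis using Suc.IH by (simp add: derived_Ici)
  qed
qed

theorem theorem1p3:
  shows "(\<forall>k\<in>seqT. \<exists>L. (\<lambda>r. zeta_star (map k [0..<r])) \<longlonglongrightarrow> L \<and> L > 1)
    \<and> bij_betw eta seqT {1<..}
    \<and> (\<forall>k\<in>seqT. \<forall>m\<in>seqT. succT k m \<longleftrightarrow> eta k > eta m)
    \<and> (\<forall>n\<ge>1. (derived_set ^^ n) Zstar = {1..})"
proof (intro conjI ballI allI impI)
  fix k assume k: "k \<in> seqT"
  show "\<exists>L. (\<lambda>r. zeta_star (map k [0..<r])) \<longlonglongrightarrow> L \<and> L > 1"
    using Zk_lim[OF k] eta_gt1[OF k] by blast
next
  show "bij_betw eta seqT {1<..}" unfolding bij_betw_def using eta_inj eta_surj by blast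
next
  fix k m assume "k \<in> seqT" "m \<in> seqT"
  then show "succT k m \<longleftrightarrow> eta k > eta m" by (rule order_iff)
next
  fix n :: nat assume "n \<ge> 1"
  then show "(derived_set ^^ n) Zstar = {1..}" by (rule derived_iter)
qed

end
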